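(* In the currency market model #1 described in the context, assume $\{\lambda^{ij}_t>0\}=\{\lambda^{ji}_t>0\}$ for all $i,j\le d$ and $t\in\mathbb T$. Then for every $t\in\mathbb T$ and every $\eta\in L^0(\mathbb M^d;\mathcal H_t)$ such that $F_t(\eta)\in N^0_t(F)$, one has $F_t(-\eta)=-F_t(\eta)$ a.s. (so condition $\mathbf{HN^0}$ holds, since $\mathcal A=\mathbb M^d$).
   Context: Let $T\in\mathbb N$, $\mathbb T=\{0,\dots,T\}$, $d\ge1$, $(\Omega,\mathcal F,\mathbb P)$ a complete probability space and $\mathbb H=(\mathcal H_t)_{t\in\mathbb T}$ a filtration with $\mathcal H_T\subset\mathcal F$. $\mathbb M^d$ denotes real $d\times d$ matrices, $\mathbb M^d_+$ those with nonnegative entries; $L^0(E;\mathcal G)$ denotes $E$-valued $\mathcal G$-measurable random variables. Let $S=(S_t)_{t\in\mathbb T}$ be an $\mathcal F$-measurable $(0,\infty)^d$-valued process and $\lambda=(\lambda_t)_{t\in\mathbb T}$ an $\mathcal F$-measurable $\mathbb M^d_+$-valued process (neither necessarily $\mathbb H$-adapted); set $\tau^{ji}_t=S^i_t/S^j_t$. For $\rho,\ell\in\mathbb M^d_+$ define $f(\cdot;\rho,\ell):\mathbb M^d\to\mathbb R^d$ by $f^i(a;\rho,\ell)=\sum_{j=1}^d a^{ji}\big(1+\ell^{ij}\mathbf 1_{\{a^{ji}<0\}}\big)-a^{ij}\rho^{ij}\big(1+\ell^{ij}\mathbf 1_{\{a^{ij}\ge0\}}\big)$, $i\le d$. Set $\mathcal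 A=\mathbb M^d$ and $F_t(a)=f(a;\tau_t,\lambda_t)$, $t\in\mathbb T$. Let $N_t(F)=\{F_t(\eta):\eta\in L^0(\mathbb M^d;\mathcal H_t)\}$ and $N^0_t(F)=N_t(F)\cap(-N_t(F))$. *)

theory Defs
  imports "HOL-Probability.Probability"
begin

text \<open>Matrices in M^d are represented as real^'d^'d with a^{ij} = a$i$j,
  vectors in R^d as real^'d; the index type 'd is finite with CARD('d) = d.\<close>

definition filtration :: "'a measure \<Rightarrow> nat \<Rightarrow> (nat \<Rightarrow> 'a measure) \<Rightarrow> bool" where
  "filtration M T H \<longleftrightarrow>
     (\<forall>t\<le>T. subalgebra M (H t)) \<and> (\<forall>s t. s \<le> t \<longrightarrow> t \<le> T \<longrightarrow> sets (H s) \<subseteq> sets (H t))"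

definition fcost :: "real^'d^'d \<Rightarrow> real^'d^'d \<Rightarrow> real^'d^'d \<Rightarrow> real^'d" where
  "fcost a \<rho> l = (\<chi> i. \<Sum>j\<in>UNIV.
       a$j$i * (1 + (if a$j$i < 0 then l$i$j else 0))
     - a$i$j * \<rho>$i$j * (1 + (if a$i$j \<ge> 0 then l$i$j else 0)))"

definition tau :: "(nat \<Rightarrow> 'a \<Rightarrow> real^'d) \<Rightarrow> nat \<Rightarrow> 'a \<Rightarrow> real^'d^'d" where
  "tau S t \<omega> = (\<chi> j i. S t \<omega> $ i / S t \<omega> $ j)"

definition Fcur :: "(nat \<Rightarrow> 'a \<Rightarrow> real^'d) \<Rightarrow> (nat \<Rightarrow> 'a \<Rightarrow> real^'d^'d)
    \<Rightarrow> nat \<Rightarrow> real^'d^'d \<Rightarrow> 'a \<Rightarrow> real^'d" where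
  "Fcur S lam t a \<omega> = fcost a (tau S t \<omega>) (lam t \<omega>)"

definition Nset :: "'a measure \<Rightarrow> (nat \<Rightarrow> 'a measure)
    \<Rightarrow> (nat \<Rightarrow> real^'d^'d \<Rightarrow> 'a \<Rightarrow> real^'d) \<Rightarrow> nat \<Rightarrow> ('a \<Rightarrow> real^'d) set" where
  "Nset M H F t = {X. \<exists>\<eta> \<in> borel_measurable (H t). AE \<omega> in M. X \<omega> = F t (\<eta> \<omega>) \<omega>}"

definition N0set :: "'a measure \<Rightarrow> (nat \<Rightarrow> 'a measure)
    \<Rightarrow> (nat \<Rightarrow> real^'d^'d \<Rightarrow> 'a \<Rightarrow> real^'d) \<Rightarrow> nat \<Rightarrow> ('a \<Rightarrow> real^'d) set" where
  "N0set M H F t = Nset M H F t \<inter> {X. (\<lambda>\<omega>. - X \<omega>) \<in> Nset M H F t}"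

end

theory Submission
  imports Defs
begin

definition gc :: "real^'d \<Rightarrow> real^'d^'d \<Rightarrow> real^'d^'d \<Rightarrow> 'd \<Rightarrow> 'd \<Rightarrow> real" where
  "gc s a l i j = s$i * (if a$j$i < 0 then - a$j$i * l$i$j else a$j$i * l$j$i)"

lemma val:
  fixes a l :: "real^'d^'d" and s :: "real^'d"
  assumes s: "\<And>i. s$i > 0"
  shows "(\<Sum>i\<in>UNIV. s$i * fcost a (\<chi> j i. s$i/s$j) l $ i) = - (\<Sum>i\<in>UNIV. \<Sum>j\<in>UNIV. gc s a l i j)"
proof -
  have e: "s$i * fcost a (\<chi> j i. s$i/s$j) l $ i = (\<Sum>j\<in>UNIV. s$i * a$j$i - s$j * a$i$j
     + s$i * a$j$i * (if a$j$i < 0 then l$i$j else 0) - s$j * a$i$j * (if a$i$j \<ge> 0 then l$i$j else 0))" for i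
    unfolding fcost_def using s[of i]
    by (simp add: sum_distrib_left algebra_simps)
  have sw1: "(\<Sum>i\<in>UNIV. \<Sum>j\<in>UNIV. s$j * a$i$j) = (\<Sum>i\<in>(UNIV::'d set). \<Sum>j\<in>UNIV. s$i * a$j$i)"
    by (rule sum.swap)
  have sw2: "(\<Sum>i\<in>UNIV. \<Sum>j\<in>UNIV. s$j * a$i$j * (if a$i$j \<ge> 0 then l$i$j else 0))
     = (\<Sum>i\<in>(UNIV::'d set). \<Sum>j\<in>UNIV. s$i * a$j$i * (if a$j$i \<ge> 0 then l$j$i else 0))"
    by (rule sum.swap)
  have "(\<Sum>i\<in>UNIV. s$i * fcost a (\<chi> j i. s$i/s$j) l $ i) =
     (\<Sum>i\<in>UNIV. \<Sum>j\<in>UNIV. s$i * a$j$i) - (\<Sum>i\<in>UNIV. \<Sum>j\<in>UNIV. s$j * a$i$j)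
     + (\<Sum>i\<in>UNIV. \<Sum>j\<in>UNIV. s$i * a$j$i * (if a$j$i < 0 then l$i$j else 0))
     - (\<Sum>i\<in>UNIV. \<Sum>j\<in>UNIV. s$j * a$i$j * (if a$i$j \<ge> 0 then l$i$j else 0))"
    unfolding e by (simp add: sum.distrib sum_subtractf)
  also have "\<dots> = (\<Sum>i\<in>UNIV. \<Sum>j\<in>UNIV. s$i * a$j$i * (if a$j$i < 0 then l$i$j else 0)
        - s$i * a$j$i * (if a$j$i \<ge> 0 then l$j$i else 0))"
    unfolding sw1 sw2 by (simp add: sum_subtractf)
  also have "\<dots> = - (\<Sum>i\<in>UNIV. \<Sum>j\<in>UNIV. gc s a l i j)"
    unfolding gc_def sum_negf[symmetric] by (intro sum.cong refl) (auto simp: algebra_simps)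
  finally show ?thesis .
qed

lemma gc_nonneg:
  fixes a l :: "real^'d^'d" and s :: "real^'d"
  assumes s: "\<And>i. s$i > 0" and l: "\<And>i j. l$i$j \<ge> 0"
  shows "gc s a l i j \<ge> 0"
  unfolding gc_def using s[of i] l[of i j] l[of j i]
  by (auto intro!: mult_nonneg_nonneg simp: mult_nonpos_nonneg mult_le_0_iff)

lemma key:
  fixes a b l :: "real^'d^'d" and s :: "real^'d"
  assumes s: "\<And>i. s$i > 0" and l: "\<And>i j. l$i$j \<ge> 0"
    and sym: "\<And>i j. l$i$j > 0 \<longleftrightarrow> l$j$i > 0"
    and ab: "fcost a (\<chi> j i. s$i/s$j) l + fcost b (\<chi> j i. s$i/s$j) l = 0"
  shows "fcost (-a) (\<chi> j i. s$i/s$j) l = - fcost a (\<chi> j i. s$i/s$j) l"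
proof -
  let ?r = "\<chi> j i. s$i/s$j :: real^'d^'d"
  have "(\<Sum>i\<in>UNIV. s$i * fcost a ?r l $ i) + (\<Sum>i\<in>UNIV. s$i * fcost b ?r l $ i) = 
        (\<Sum>i\<in>UNIV. s$i * (fcost a ?r l + fcost b ?r l) $ i)"
    by (simp add: sum.distrib[symmetric] algebra_simps)
  also have "\<dots> = 0" using ab by simp
  finally have "(\<Sum>i\<in>UNIV. \<Sum>j\<in>UNIV. gc s a l i j) + (\<Sum>i\<in>UNIV. \<Sum>j\<in>UNIV. gc s b l i j) = 0"
    unfolding val[OF s] by simp
  moreover have "(\<Sum>i\<in>UNIV. \<Sum>j\<in>UNIV. gc s a l i j) \<ge> 0" "(\<Sum>i\<in>UNIV. \<Sum>j\<in>UNIV. gc s b l i j) \<ge> 0"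
    using gc_nonneg[OF s l] by (simp_all add: sum_nonneg)
  ultimately have "(\<Sum>i\<in>UNIV. \<Sum>j\<in>UNIV. gc s a l i j) = 0" by linarith
  hence "\<forall>i\<in>UNIV. (\<Sum>j\<in>UNIV. gc s a l i j) = 0"
    by (subst (asm) sum_nonneg_eq_0_iff) (auto intro!: sum_nonneg gc_nonneg[OF s l])
  hence g0: "gc s a l i j = 0" for i j
    using sum_nonneg_eq_0_iff[of UNIV "gc s a l i"] gc_nonneg[OF s l] by auto
  have z: "a$j$i = 0 \<or> (l$i$j = 0 \<and> l$j$i = 0)" for i j
  proof -
    have "(if a$j$i < 0 then - a$j$i * l$i$j else a$j$i * l$j$i) = 0"
      using g0[of i j] s[of i] unfolding gc_def by simp
    thus ?thesis using sym[of i j] l[of i j] l[of j i]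
      by (smt (verit, ccfv_threshold) mult_eq_0_iff)
  qed
  have lin: "fcost c ?r l = (\<chi> i. \<Sum>j\<in>UNIV. c$j$i - c$i$j * ?r$i$j)"
    if "\<And>i j. c$j$i = 0 \<or> (l$i$j = 0 \<and> l$j$i = 0)" for c :: "real^'d^'d"
    unfolding fcost_def
  proof (rule arg_cong[where f=vec_lambda], rule ext, rule sum.cong[OF refl])
    fix i j
    show "c$j$i * (1 + (if c$j$i < 0 then l$i$j else 0))
       - c$i$j * ?r$i$j * (1 + (if c$i$j \<ge> 0 then l$i$j else 0)) = c$j$i - c$i$j * ?r$i$j"
      using that[of i j] that[of j i] by (auto simp: algebra_simps)
  qed
  show ?thesis
    apply (subst lin, use z in force)
    apply (subst lin, use z in force)
    by (simp add: vec_eq_iff sum_negf[symmetric] algebra_simps)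
qed

theorem mainTheorem9:
  fixes M :: "'a measure" and T :: nat and H :: "nat \<Rightarrow> 'a measure"
    and S :: "nat \<Rightarrow> 'a \<Rightarrow> real^'d" and lam :: "nat \<Rightarrow> 'a \<Rightarrow> real^'d^'d"
  assumes "prob_space M" and "complete_measure M"
    and "filtration M T H"
    and "\<And>t. t \<le> T \<Longrightarrow> S t \<in> borel_measurable M"
    and "\<And>t \<omega> i. t \<le> T \<Longrightarrow> \<omega> \<in> space M \<Longrightarrow> S t \<omega> $ i > 0"
    and "\<And>t. t \<le> T \<Longrightarrow> lam t \<in> borel_measurable M"
    and "\<And>t \<omega> i j. t \<le> T \<Longrightarrow> \<omega> \<in> space M \<Longrightarrow> lam t \<omega> $ i $ j \<ge> 0"
    and "\<And>t i j. t \<le> T \<Longrightarrow>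
           {\<omega> \<in> space M. lam t \<omega> $ i $ j > 0} = {\<omega> \<in> space M. lam t \<omega> $ j $ i > 0}"
  shows "\<forall>t \<le> T. \<forall>\<eta> \<in> borel_measurable (H t).
           (\<lambda>\<omega>. Fcur S lam t (\<eta> \<omega>) \<omega>) \<in> N0set M H (Fcur S lam) t \<longrightarrow>
           (AE \<omega> in M. Fcur S lam t (- \<eta> \<omega>) \<omega> = - Fcur S lam t (\<eta> \<omega>) \<omega>)"
proof (intro allI impI ballI)
  fix t \<eta> assume t: "t \<le> T" and eta: "\<eta> \<in> borel_measurable (H t)"
    and N: "(\<lambda>\<omega>. Fcur S lam t (\<eta> \<omega>) \<omega>) \<in> N0set M H (Fcur S lam) t"
  from N obtain \<eta>' where "AE \<omega> in M. - Fcur S lam t (\<eta> \<omega>) \<omega> = Fcur S lam t (\<eta>' \<omega>) \<omega>"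
    unfolding N0set_def Nset_def by auto
  then show "AE \<omega> in M. Fcur S lam t (- \<eta> \<omega>) \<omega> = - Fcur S lam t (\<eta> \<omega>) \<omega>"
  proof (rule AE_mp[OF _ AE_I2], intro impI)
    fix \<omega> assume w: "\<omega> \<in> space M"
      and e: "- Fcur S lam t (\<eta> \<omega>) \<omega> = Fcur S lam t (\<eta>' \<omega>) \<omega>"
    have sym: "lam t \<omega> $ i $ j > 0 \<longleftrightarrow> lam t \<omega> $ j $ i > 0" for i j
      using assms(8)[OF t, of i j] w by (auto simp: set_eq_iff)
    have ab: "fcost (\<eta> \<omega>) (\<chi> j i. S t \<omega> $ i / S t \<omega> $ j) (lam t \<omega>)
       + fcost (\<eta>' \<omega>) (\<chi> j i. S t \<omega> $ i / S t \<omega> $ j) (lam t \<omega>) = 0"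
      using e unfolding Fcur_def tau_def by (metis add.commute neg_eq_iff_add_eq_0)
    show "Fcur S lam t (- \<eta> \<omega>) \<omega> = - Fcur S lam t (\<eta> \<omega>) \<omega>"
      unfolding Fcur_def tau_def
      by (rule key[OF assms(5)[OF t w] assms(7)[OF t w] sym ab])
  qed
qed

end
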